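(* The relaxed capacity allocation subproblem (defined below) is equivalent to the maximum net-flow problem on the graph $Z$ (defined below). Hence, for any given set of VNF-nodes $\mathcal{U} \subseteq \mathcal{V}$, the optimal value of the relaxed capacity allocation subproblem equals the maximum total net-flow at the sinks in $\mathcal{U} \subseteq \mathcal{N}_{\mathcal{V}}$ of the associated graph $Z$, i.e., $R_3(\mathcal{U}) = F(\mathcal{U})$.
   Context: Setting: a network with node set $\mathcal{V}$ and a set of flows $\mathcal{F}$; flow $f$ has traffic rate $\lambda_f$ and is routed along a fixed path whose node set is $\mathcal{V}_f$; each node $v$ has processing capacity $c_v$. For a given set of VNF-nodes $\mathcal{U} \subseteq \mathcal{V}$, an assignment $\boldsymbol{\lambda}=(\lambda_f^v)\ge 0$ (the portion of flow $f$ processed at node $v$) is feasible, written $\boldsymbol{\lambda}\in\Lambda^{\mathcal{U}}$, if $\sum_{f \in \mathcal{F}} \lambda_f^v \le c_v$ for all $v \in \mathcal{U}$, $\lambda_f^v = 0$ for all $f$ and all $v \notin \mathcal{U}$, and $\sum_{v \in \mathcal{U}} \lambda_f^v \le \lambda_f$ for all $f$. The relaxed capacity allocation subproblem is to maximize $R_2^{\mathcal{U}}(\boldsymbol{\lambda}) = \sum_{f\in\mathcal{F}} \sum_{v \in \mathcal{V}_f \cap \mathcal{U}} \lambda_f^v$ over $\boldsymbol{\lambda}\in\Lambda^{\mathcal{U}}$, and $R_3(\mathcal{U}) = \max_{\boldsymbol{\lambda}\in\Lambda^{\mathcal{U}}} R_2^{\mathcal{U}}(\boldsymbol{\lambda})$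 denotes its optimal value. Graph $Z=(\mathcal{N},\mathcal{L})$: vertices are a source $s$, a flow-vertex $f$ for each $f\in\mathcal{F}$ (set $\mathcal{N}_{\mathcal{F}}$), a vertex $v'$ for each $v\in\mathcal{V}$ (set $\mathcal{N}_{\mathcal{V}'}$), and a vertex $v$ for each $v \in \mathcal{V}$ (set $\mathcal{N}_{\mathcal{V}}$, the sinks). Edges: $(s,f)$ with capacity $\lambda_f$ for every $f$; $(f,v')$ with capacity $\lambda_f$ for every $f$ and every $v\in\mathcal{V}_f$; $(v',v)$ with capacity $c_v$ for every $v$. Let $c(x,y)$ be the edge capacity ($c(x,y)=0$ if $(x,y)\notin\mathcal{L}$). For $\varphi:\mathcal{N}\times\mathcal{N}\to\mathbb{R}_+$ let $\Phi(\mathcal{X},\mathcal{Y})=\sum_{x\in\mathcal{X}}\sum_{y\in\mathcal{Y}}\varphi(x,y)$. An $s$-$\mathcal{V}$ flow is such a $\varphi$ with $\varphi(x,y)\le c(x,y)$ for all pairs, zero net-flow $\Phi(\mathcal{N},\{x\})-\Phi(\{x\},\mathcal{N})=0$ at every vertex other than $s$ and the sinks, non-positive net-flow at $s$, and non-negative net-flow at every sink in $\mathcal{N}_{\mathcal{V}}$; $\overline{\mathcal{F}}$ is the set of all $s$-$\mathcal{V}$ flows. Identifying $\mathcal{U}\subseteq\mathcal{V}$ with the corresponding sinks in $\mathcal{N}_{\mathcal{V}}$, $F(\mathcal{U}) = \max_{\varphi \in \overline{\mathcal{F}}} (\Phi(\mathcal{N}, \mathcal{U}) - \Phi(\mathcal{U},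 \mathcal{N}))$ is the maximum total net-flow at the sinks in $\mathcal{U}$ (the maximum net-flow problem). *)

theory Defs
  imports Complex_Main
begin

text \<open>V: node set, Fl: flow set, rate f: traffic rate of flow f,
  path f: node set of the path of f, c v: processing capacity of v.
  An assignment lam f v is the portion of flow f processed at v.\<close>

definition feasible ::
  "'v set \<Rightarrow> 'f set \<Rightarrow> ('f \<Rightarrow> real) \<Rightarrow> ('v \<Rightarrow> real) \<Rightarrow> 'v set \<Rightarrow> ('f \<Rightarrow> 'v \<Rightarrow> real) set" where
  "feasible V Fl rate c U =
     {lam. (\<forall>f\<in>Fl. \<forall>v\<in>V. lam f v \<ge> 0)
         \<and> (\<forall>v\<in>U. (\<Sum>f\<in>Fl. lam f v) \<le> c v)
         \<and> (\<forall>f\<in>Fl. \<forall>v\<in>V. v \<notin> U \<longrightarrow> lam f v = 0)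
         \<and> (\<forall>f\<in>Fl. (\<Sum>v\<in>U. lam f v) \<le> rate f)}"

definition R2 :: "'f set \<Rightarrow> ('f \<Rightarrow> 'v set) \<Rightarrow> 'v set \<Rightarrow> ('f \<Rightarrow> 'v \<Rightarrow> real) \<Rightarrow> real" where
  "R2 Fl path U lam = (\<Sum>f\<in>Fl. \<Sum>v\<in>path f \<inter> U. lam f v)"

text \<open>Optimal value of the relaxed capacity allocation subproblem (the maximum,
  expressed as a supremum over the feasible set).\<close>
definition R3 ::
  "'v set \<Rightarrow> 'f set \<Rightarrow> ('f \<Rightarrow> real) \<Rightarrow> ('f \<Rightarrow> 'v set) \<Rightarrow> ('v \<Rightarrow> real) \<Rightarrow> 'v set \<Rightarrow> real" where
  "R3 V Fl rate path c U = (SUP lam \<in> feasible V Fl rate c U. R2 Fl path U lam)"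

datatype ('f, 'v) znode = Src | FN 'f | VP 'v | VN 'v

definition znodes :: "'v set \<Rightarrow> 'f set \<Rightarrow> ('f, 'v) znode set" where
  "znodes V Fl = {Src} \<union> FN ` Fl \<union> VP ` V \<union> VN ` V"

text \<open>Edge capacities; 0 for pairs that are not edges.\<close>
fun zcap ::
  "'v set \<Rightarrow> 'f set \<Rightarrow> ('f \<Rightarrow> real) \<Rightarrow> ('f \<Rightarrow> 'v set) \<Rightarrow> ('v \<Rightarrow> real)
   \<Rightarrow> ('f, 'v) znode \<Rightarrow> ('f, 'v) znode \<Rightarrow> real" where
  "zcap V Fl rate path c Src (FN f) = (if f \<in> Fl then rate f else 0)"
| "zcap V Fl rate path c (FN f) (VP v) = (if f \<in> Fl \<and> v \<in> path f then rate f else 0)"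
| "zcap V Fl rate path c (VP v) (VN w) = (if v = w \<and> v \<in> V then c v else 0)"
| "zcap V Fl rate path c _ _ = 0"

definition Phi :: "('n \<Rightarrow> 'n \<Rightarrow> real) \<Rightarrow> 'n set \<Rightarrow> 'n set \<Rightarrow> real" where
  "Phi \<phi> X Y = (\<Sum>x\<in>X. \<Sum>y\<in>Y. \<phi> x y)"

definition sV_flows ::
  "'v set \<Rightarrow> 'f set \<Rightarrow> ('f \<Rightarrow> real) \<Rightarrow> ('f \<Rightarrow> 'v set) \<Rightarrow> ('v \<Rightarrow> real)
   \<Rightarrow> (('f, 'v) znode \<Rightarrow> ('f, 'v) znode \<Rightarrow> real) set" where
  "sV_flows V Fl rate path c =
     (let N = znodes V Fl in
      {\<phi>. (\<forall>x\<in>N. \<forall>y\<in>N. 0 \<le> \<phi> x y \<and> \<phi> x y \<le> zcap V Fl rate path c x y)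
         \<and> (\<forall>x\<in>N. x \<noteq> Src \<and> x \<notin> VN ` V \<longrightarrow> Phi \<phi> N {x} - Phi \<phi> {x} N = 0)
         \<and> Phi \<phi> N {Src} - Phi \<phi> {Src} N \<le> 0
         \<and> (\<forall>v\<in>V. Phi \<phi> N {VN v} - Phi \<phi> {VN v} N \<ge> 0)})"

text \<open>Maximum total net-flow at the sinks corresponding to U (a supremum).\<close>
definition Fmax ::
  "'v set \<Rightarrow> 'f set \<Rightarrow> ('f \<Rightarrow> real) \<Rightarrow> ('f \<Rightarrow> 'v set) \<Rightarrow> ('v \<Rightarrow> real) \<Rightarrow> 'v set \<Rightarrow> real" where
  "Fmax V Fl rate path c U =
     (let N = znodes V Fl in
      SUP \<phi> \<in> sV_flows V Fl rate path c. Phi \<phi> N (VN ` U) - Phi \<phi> (VN ` U) N)"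

end

theory Submission
  imports Defs
begin

lemma sum_znodes:
  assumes "finite V" "finite Fl"
  shows "sum g (znodes V Fl) = g Src + (\<Sum>f\<in>Fl. g (FN f)) + (\<Sum>v\<in>V. g (VP v)) + (\<Sum>v\<in>V. g (VN v))"
proof -
  have e: "znodes V Fl = insert Src (FN ` Fl \<union> VP ` V \<union> VN ` V)"
    unfolding znodes_def by auto
  have "sum g (znodes V Fl) = g Src + sum g (FN ` Fl \<union> VP ` V \<union> VN ` V)"
    unfolding e using assms by (subst sum.insert) auto
  also have "sum g (FN ` Fl \<union> VP ` V \<union> VN ` V) = sum g (FN ` Fl) + sum g (VP ` V) + sum g (VN ` V)"
    using assms by (subst sum.union_disjoint, auto, subst sum.union_disjoint, auto)
  also have "sum g (FN ` Fl) = (\<Sum>f\<in>Fl. g (FN f))" by (subst sum.reindex) (auto simp: inj_on_def)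
  also have "sum g (VP ` V) = (\<Sum>v\<in>V. g (VP v))" by (subst sum.reindex) (auto simp: inj_on_def)
  also have "sum g (VN ` V) = (\<Sum>v\<in>V. g (VN v))" by (subst sum.reindex) (auto simp: inj_on_def)
  finally show ?thesis by (simp add: add.assoc)
qed

lemma mem_znodes: "x \<in> znodes V Fl \<longleftrightarrow> x = Src \<or> (\<exists>f\<in>Fl. x = FN f) \<or> (\<exists>v\<in>V. x = VP v) \<or> (\<exists>v\<in>V. x = VN v)"
  unfolding znodes_def by auto

lemma sum_delta_conj:
  assumes "finite A"
  shows "(\<Sum>v\<in>A. if v = x \<and> P v then g v else (0::real)) = (if x \<in> A \<and> P x then g x else 0)"
proof -
  have "(\<Sum>v\<in>A. if v = x \<and> P v then g v else (0::real)) = (\<Sum>v\<in>A. if v = x then (if P x then g x else 0) else 0)"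
    by (intro sum.cong) auto
  also have "\<dots> = (if x \<in> A \<and> P x then g x else 0)" using assms by (simp add: sum.delta)
  finally show ?thesis .
qed

fun mkphi :: "'f set \<Rightarrow> ('f \<Rightarrow> 'v set) \<Rightarrow> 'v set \<Rightarrow> ('f \<Rightarrow> 'v \<Rightarrow> real)
   \<Rightarrow> ('f, 'v) znode \<Rightarrow> ('f, 'v) znode \<Rightarrow> real" where
  "mkphi Fl path U lam Src (FN f) = (\<Sum>v\<in>path f \<inter> U. lam f v)"
| "mkphi Fl path U lam (FN f) (VP v) = (if v \<in> path f \<and> v \<in> U then lam f v else 0)"
| "mkphi Fl path U lam (VP v) (VN w) = (if v = w \<and> v \<in> U then (\<Sum>f\<in>{f\<in>Fl. v \<in> path f}. lam f v) else 0)"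
| "mkphi Fl path U lam _ _ = 0"

lemma dir1:
  assumes fin: "finite V" "finite Fl"
    and pth: "\<forall>f\<in>Fl. path f \<subseteq> V"
    and UV: "U \<subseteq> V" and rpos: "\<forall>f\<in>Fl. rate f \<ge> 0" and cpos: "\<forall>v\<in>V. c v \<ge> 0"
    and lam: "lam \<in> feasible V Fl rate c U"
  shows "mkphi Fl path U lam \<in> sV_flows V Fl rate path c
    \<and> Phi (mkphi Fl path U lam) (znodes V Fl) (VN ` U) - Phi (mkphi Fl path U lam) (VN ` U) (znodes V Fl)
      = R2 Fl path U lam"
proof -
  let ?p = "mkphi Fl path U lam"
  have nn: "\<And>f v. f \<in> Fl \<Longrightarrow> v \<in> V \<Longrightarrow> lam f v \<ge> 0"
   and cap: "\<And>v. v \<in> U \<Longrightarrow> (\<Sum>f\<in>Fl. lam f v) \<le> c v"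
   and rt: "\<And>f. f \<in> Fl \<Longrightarrow> (\<Sum>v\<in>U. lam f v) \<le> rate f"
    using lam unfolding feasible_def by auto
  have finU: "finite U" using fin UV finite_subset by auto
  have b1: "0 \<le> (\<Sum>v\<in>path f \<inter> U. lam f v) \<and> (\<Sum>v\<in>path f \<inter> U. lam f v) \<le> rate f" if "f \<in> Fl" for f
  proof
    show "0 \<le> (\<Sum>v\<in>path f \<inter> U. lam f v)" using nn that UV by (intro sum_nonneg) auto
    have "(\<Sum>v\<in>path f \<inter> U. lam f v) \<le> (\<Sum>v\<in>U. lam f v)"
      using nn that UV finU by (intro sum_mono2) auto
    then show "(\<Sum>v\<in>path f \<inter> U. lam f v) \<le> rate f" using rt[OF that] by simp
  qed
  have b2: "lam f v \<le> rate f" if "f \<in> Fl" "v \<in> U" for f v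
  proof -
    have "lam f v \<le> (\<Sum>v\<in>U. lam f v)"
      using nn that UV finU by (intro member_le_sum) auto
    then show ?thesis using rt[OF that(1)] by simp
  qed
  have b3: "0 \<le> (\<Sum>f\<in>{f\<in>Fl. v \<in> path f}. lam f v) \<and> (\<Sum>f\<in>{f\<in>Fl. v \<in> path f}. lam f v) \<le> c v" if "v \<in> U" for v
  proof
    show "0 \<le> (\<Sum>f\<in>{f\<in>Fl. v \<in> path f}. lam f v)" using nn that UV by (intro sum_nonneg) auto
    have "(\<Sum>f\<in>{f\<in>Fl. v \<in> path f}. lam f v) \<le> (\<Sum>f\<in>Fl. lam f v)"
      using nn that UV fin by (intro sum_mono2) auto
    then show "(\<Sum>f\<in>{f\<in>Fl. v \<in> path f}. lam f v) \<le> c v" using cap[OF that] by simp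
  qed
  have bounds: "\<forall>x\<in>znodes V Fl. \<forall>y\<in>znodes V Fl. 0 \<le> ?p x y \<and> ?p x y \<le> zcap V Fl rate path c x y"
  proof (intro ballI)
    fix x y assume "x \<in> znodes V Fl" "y \<in> znodes V Fl"
    then show "0 \<le> ?p x y \<and> ?p x y \<le> zcap V Fl rate path c x y"
      unfolding mem_znodes using b1 b2 b3 nn UV pth rpos cpos by (auto split: if_splits)
  qed
  have sd: "(\<Sum>v\<in>V. if v \<in> path f \<and> v \<in> U then lam f v else 0) = (\<Sum>v\<in>path f \<inter> U. lam f v)"
    if "f \<in> Fl" for f
  proof -
    have "(\<Sum>v\<in>V. if v \<in> path f \<and> v \<in> U then lam f v else 0) = (\<Sum>v\<in>{v\<in>V. v \<in> path f \<and> v \<in> U}. lam f v)"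
      using fin by (simp add: sum.inter_filter)
    also have "{v\<in>V. v \<in> path f \<and> v \<in> U} = path f \<inter> U" using pth that by auto
    finally show ?thesis .
  qed
  have sd2: "(\<Sum>f\<in>Fl. if v \<in> path f \<and> v \<in> U then lam f v else 0) = (if v \<in> U then (\<Sum>f\<in>{f\<in>Fl. v \<in> path f}. lam f v) else 0)" for v
    using fin by (simp add: sum.inter_filter[symmetric])
  have cons: "\<forall>x\<in>znodes V Fl. x \<noteq> Src \<and> x \<notin> VN ` V \<longrightarrow> Phi ?p (znodes V Fl) {x} - Phi ?p {x} (znodes V Fl) = 0"
  proof (intro ballI impI)
    fix x assume "x \<in> znodes V Fl" "x \<noteq> Src \<and> x \<notin> VN ` V"
    then show "Phi ?p (znodes V Fl) {x} - Phi ?p {x} (znodes V Fl) = 0"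
      unfolding mem_znodes Phi_def using fin sd sd2 by (auto simp: sum_znodes)
  qed
  have src: "Phi ?p (znodes V Fl) {Src} - Phi ?p {Src} (znodes V Fl) \<le> 0"
    unfolding Phi_def using fin b1 nn UV by (auto simp: sum_znodes intro!: sum_nonneg)
  have snk: "\<forall>v\<in>V. Phi ?p (znodes V Fl) {VN v} - Phi ?p {VN v} (znodes V Fl) \<ge> 0"
    unfolding Phi_def using fin b3 nn by (auto simp: sum_znodes intro!: sum_nonneg)
  have mem: "?p \<in> sV_flows V Fl rate path c"
    unfolding sV_flows_def Let_def using bounds cons src snk by blast
  have "Phi ?p (znodes V Fl) (VN ` U) = (\<Sum>u\<in>U. \<Sum>x\<in>znodes V Fl. ?p x (VN u))"
    unfolding Phi_def by (subst sum.swap, subst sum.reindex) (auto simp: inj_on_def)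
  also have "\<dots> = (\<Sum>u\<in>U. \<Sum>f\<in>{f\<in>Fl. u \<in> path f}. lam f u)"
    using fin UV by (intro sum.cong refl) (auto simp: sum_znodes sum_delta_conj[OF fin(1)])
  also have "\<dots> = (\<Sum>u\<in>U. \<Sum>f\<in>Fl. if u \<in> path f then lam f u else 0)"
    using fin by (simp add: sum.inter_filter)
  also have "\<dots> = (\<Sum>f\<in>Fl. \<Sum>u\<in>U. if u \<in> path f then lam f u else 0)"
    by (rule sum.swap)
  also have "\<dots> = R2 Fl path U lam"
  proof -
    have "(\<Sum>u\<in>U. if u \<in> path f then lam f u else 0) = (\<Sum>v\<in>path f \<inter> U. lam f v)" for f
      by (subst Int_commute, simp add: sum.inter_restrict[OF finU])
    then show ?thesis unfolding R2_def by simp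
  qed
  finally have v1: "Phi ?p (znodes V Fl) (VN ` U) = R2 Fl path U lam" .
  have v2: "Phi ?p (VN ` U) (znodes V Fl) = 0"
    unfolding Phi_def using fin by (auto simp: sum_znodes intro!: sum.neutral)
  show ?thesis using mem v1 v2 by simp
qed


lemma mem_zn_simps[simp]:
  "Src \<in> znodes V Fl" "FN f \<in> znodes V Fl \<longleftrightarrow> f \<in> Fl"
  "VP v \<in> znodes V Fl \<longleftrightarrow> v \<in> V" "VN v \<in> znodes V Fl \<longleftrightarrow> v \<in> V"
  unfolding znodes_def by auto

definition lamof :: "'f set \<Rightarrow> ('f \<Rightarrow> 'v set) \<Rightarrow> 'v set \<Rightarrow> (('f, 'v) znode \<Rightarrow> ('f, 'v) znode \<Rightarrow> real)
   \<Rightarrow> 'f \<Rightarrow> 'v \<Rightarrow> real" where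
  "lamof Fl path U \<phi> f v = (if f \<in> Fl \<and> v \<in> path f \<and> v \<in> U then \<phi> (FN f) (VP v) else 0)"

lemma dir2:
  assumes fin: "finite V" "finite Fl"
    and pth: "\<forall>f\<in>Fl. path f \<subseteq> V"
    and UV: "U \<subseteq> V"
    and phi: "\<phi> \<in> sV_flows V Fl rate path c"
  shows "lamof Fl path U \<phi> \<in> feasible V Fl rate c U
    \<and> R2 Fl path U (lamof Fl path U \<phi>) = Phi \<phi> (znodes V Fl) (VN ` U) - Phi \<phi> (VN ` U) (znodes V Fl)"
proof -
  let ?N = "znodes V Fl"
  have bnd: "\<And>x y. x \<in> ?N \<Longrightarrow> y \<in> ?N \<Longrightarrow> 0 \<le> \<phi> x y \<and> \<phi> x y \<le> zcap V Fl rate path c x y"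
   and cons: "\<And>x. x \<in> ?N \<Longrightarrow> x \<noteq> Src \<Longrightarrow> x \<notin> VN ` V \<Longrightarrow> Phi \<phi> ?N {x} - Phi \<phi> {x} ?N = 0"
  proof -
    have P: "(\<forall>x\<in>?N. \<forall>y\<in>?N. 0 \<le> \<phi> x y \<and> \<phi> x y \<le> zcap V Fl rate path c x y)
         \<and> (\<forall>x\<in>?N. x \<noteq> Src \<and> x \<notin> VN ` V \<longrightarrow> Phi \<phi> ?N {x} - Phi \<phi> {x} ?N = 0)"
      using phi unfolding sV_flows_def Let_def mem_Collect_eq by (elim conjE) (intro conjI)
    show "\<And>x y. x \<in> ?N \<Longrightarrow> y \<in> ?N \<Longrightarrow> 0 \<le> \<phi> x y \<and> \<phi> x y \<le> zcap V Fl rate path c x y"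
      using P by blast
    show "\<And>x. x \<in> ?N \<Longrightarrow> x \<noteq> Src \<Longrightarrow> x \<notin> VN ` V \<Longrightarrow> Phi \<phi> ?N {x} - Phi \<phi> {x} ?N = 0"
      using P by blast
  qed
  have z[simp]: "\<phi> x y = 0" if "x \<in> ?N" "y \<in> ?N" "zcap V Fl rate path c x y = 0" for x y
    using bnd[OF that(1,2)] that(3) by linarith
  have finU: "finite U" using fin UV finite_subset by auto
  have PhiR: "Phi \<phi> ?N {x} = (\<Sum>y\<in>?N. \<phi> y x)" "Phi \<phi> {x} ?N = (\<Sum>y\<in>?N. \<phi> x y)" for x
    unfolding Phi_def by simp_all
  have inFN: "(\<Sum>x\<in>?N. \<phi> x (FN f)) = \<phi> Src (FN f)" if "f \<in> Fl" for f
    using fin that by (simp add: sum_znodes)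
  have outFN: "(\<Sum>x\<in>?N. \<phi> (FN f) x) = (\<Sum>v\<in>V. \<phi> (FN f) (VP v))" if "f \<in> Fl" for f
    using fin that by (simp add: sum_znodes)
  have inVP: "(\<Sum>x\<in>?N. \<phi> x (VP v)) = (\<Sum>f\<in>Fl. \<phi> (FN f) (VP v))" if "v \<in> V" for v
    using fin that by (simp add: sum_znodes)
  have d1: "(\<Sum>w\<in>V. \<phi> (VP v) (VN w)) = \<phi> (VP v) (VN v)" if "v \<in> V" for v
  proof -
    have "(\<Sum>w\<in>V. \<phi> (VP v) (VN w)) = (\<Sum>w\<in>V. if v = w then \<phi> (VP v) (VN w) else 0)"
      using that by (intro sum.cong) auto
    also have "\<dots> = \<phi> (VP v) (VN v)" using fin that by (simp add: sum.delta)
    finally show ?thesis .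
  qed
  have d2: "(\<Sum>w\<in>V. \<phi> (VP w) (VN v)) = \<phi> (VP v) (VN v)" if "v \<in> V" for v
  proof -
    have "(\<Sum>w\<in>V. \<phi> (VP w) (VN v)) = (\<Sum>w\<in>V. if w = v then \<phi> (VP w) (VN v) else 0)"
      using that by (intro sum.cong) auto
    also have "\<dots> = \<phi> (VP v) (VN v)" using fin that by (simp add: sum.delta')
    finally show ?thesis .
  qed
  have outVP: "(\<Sum>x\<in>?N. \<phi> (VP v) x) = \<phi> (VP v) (VN v)" if "v \<in> V" for v
    using fin that d1 by (simp add: sum_znodes)
  have inVN: "(\<Sum>x\<in>?N. \<phi> x (VN v)) = \<phi> (VP v) (VN v)" if "v \<in> V" for v
    using fin that d2 by (simp add: sum_znodes)
  have outVN: "(\<Sum>x\<in>?N. \<phi> (VN v) x) = 0" if "v \<in> V" for v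
    using fin that by (simp add: sum_znodes)
  have consFN: "\<phi> Src (FN f) = (\<Sum>v\<in>V. \<phi> (FN f) (VP v))" if "f \<in> Fl" for f
  proof -
    have nv: "FN f \<notin> VN ` V" by auto
    have "Phi \<phi> ?N {FN f} - Phi \<phi> {FN f} ?N = 0" by (rule cons[OF _ _ nv]) (use that in simp_all)
    then have "(\<Sum>y\<in>?N. \<phi> y (FN f)) - (\<Sum>y\<in>?N. \<phi> (FN f) y) = 0" by (simp only: PhiR)
    then show ?thesis using inFN[OF that] outFN[OF that] by linarith
  qed
  have consVP: "\<phi> (VP v) (VN v) = (\<Sum>f\<in>Fl. \<phi> (FN f) (VP v))" if "v \<in> V" for v
  proof -
    have nv: "VP v \<notin> VN ` V" by auto
    have "Phi \<phi> ?N {VP v} - Phi \<phi> {VP v} ?N = 0" by (rule cons[OF _ _ nv]) (use that in simp_all)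
    then have "(\<Sum>y\<in>?N. \<phi> y (VP v)) - (\<Sum>y\<in>?N. \<phi> (VP v) y) = 0" by (simp only: PhiR)
    then show ?thesis using inVP[OF that] outVP[OF that] by linarith
  qed
  have offpath: "\<phi> (FN f) (VP v) = 0" if "f \<in> Fl" "v \<in> V" "v \<notin> path f" for f v
    using that by simp
  let ?l = "lamof Fl path U \<phi>"
  have f1: "\<forall>f\<in>Fl. \<forall>v\<in>V. ?l f v \<ge> 0" unfolding lamof_def using bnd by auto
  have f2: "(\<Sum>f\<in>Fl. ?l f v) \<le> c v" if "v \<in> U" for v
  proof -
    have v: "v \<in> V" using that UV by auto
    have "(\<Sum>f\<in>Fl. ?l f v) = (\<Sum>f\<in>Fl. \<phi> (FN f) (VP v))"
      unfolding lamof_def using that v offpath by (intro sum.cong) auto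
    also have "\<dots> = \<phi> (VP v) (VN v)" using consVP[OF v] by simp
    also have "\<dots> \<le> c v" using bnd[of "VP v" "VN v"] v by simp
    finally show ?thesis .
  qed
  have f3: "\<forall>f\<in>Fl. \<forall>v\<in>V. v \<notin> U \<longrightarrow> ?l f v = 0" unfolding lamof_def by auto
  have f4: "(\<Sum>v\<in>U. ?l f v) \<le> rate f" if "f \<in> Fl" for f
  proof -
    have "(\<Sum>v\<in>U. ?l f v) \<le> (\<Sum>v\<in>U. \<phi> (FN f) (VP v))"
      unfolding lamof_def using that UV bnd by (intro sum_mono) auto
    also have "\<dots> \<le> (\<Sum>v\<in>V. \<phi> (FN f) (VP v))"
      using that UV bnd fin by (intro sum_mono2) auto
    also have "\<dots> = \<phi> Src (FN f)" using consFN[OF that] by simp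
    also have "\<dots> \<le> rate f" using bnd[of Src "FN f"] that by simp
    finally show ?thesis .
  qed
  have feas: "?l \<in> feasible V Fl rate c U"
    unfolding feasible_def using f1 f2 f3 f4 by blast
  have "Phi \<phi> ?N (VN ` U) = (\<Sum>u\<in>U. \<Sum>x\<in>?N. \<phi> x (VN u))"
    unfolding Phi_def by (subst sum.swap, subst sum.reindex) (auto simp: inj_on_def)
  also have "\<dots> = (\<Sum>u\<in>U. \<Sum>f\<in>Fl. \<phi> (FN f) (VP u))"
    using UV inVN consVP by (intro sum.cong refl) auto
  also have "\<dots> = (\<Sum>f\<in>Fl. \<Sum>u\<in>U. \<phi> (FN f) (VP u))" by (rule sum.swap)
  also have "\<dots> = R2 Fl path U ?l"
    unfolding R2_def
  proof (rule sum.cong[OF refl])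
    fix f assume f: "f \<in> Fl"
    have "(\<Sum>u\<in>U. \<phi> (FN f) (VP u)) = (\<Sum>u\<in>U. if u \<in> path f then \<phi> (FN f) (VP u) else 0)"
      using UV f offpath by (intro sum.cong) auto
    also have "\<dots> = (\<Sum>u\<in>path f \<inter> U. \<phi> (FN f) (VP u))"
      by (subst Int_commute, simp add: sum.inter_restrict[OF finU])
    also have "\<dots> = (\<Sum>u\<in>path f \<inter> U. ?l f u)"
      unfolding lamof_def using f by (intro sum.cong) auto
    finally show "(\<Sum>u\<in>U. \<phi> (FN f) (VP u)) = (\<Sum>u\<in>path f \<inter> U. ?l f u)" .
  qed
  finally have v1: "Phi \<phi> ?N (VN ` U) = R2 Fl path U ?l" .
  have "Phi \<phi> (VN ` U) ?N = (\<Sum>u\<in>U. \<Sum>x\<in>?N. \<phi> (VN u) x)"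
    unfolding Phi_def by (subst sum.reindex) (auto simp: inj_on_def)
  also have "\<dots> = 0" using UV outVN by (intro sum.neutral) auto
  finally have v2: "Phi \<phi> (VN ` U) ?N = 0" .
  show ?thesis using feas v1 v2 by simp
qed

theorem lemma1:
  fixes V :: "'v set" and Fl :: "'f set" and rate :: "'f \<Rightarrow> real"
    and path :: "'f \<Rightarrow> 'v set" and c :: "'v \<Rightarrow> real" and U :: "'v set"
  assumes "finite V" and "finite Fl"
    and "\<forall>f\<in>Fl. path f \<subseteq> V"
    and "\<forall>f\<in>Fl. rate f \<ge> 0" and "\<forall>v\<in>V. c v \<ge> 0"
    and "U \<subseteq> V"
  shows "R3 V Fl rate path c U = Fmax V Fl rate path c U"
proof -
  let ?val = "\<lambda>\<phi>. Phi \<phi> (znodes V Fl) (VN ` U) - Phi \<phi> (VN ` U) (znodes V Fl)"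
  have "R2 Fl path U ` feasible V Fl rate c U = ?val ` sV_flows V Fl rate path c"
  proof (intro equalityI subsetI)
    fix y assume "y \<in> R2 Fl path U ` feasible V Fl rate c U"
    then obtain lam where l: "lam \<in> feasible V Fl rate c U" "y = R2 Fl path U lam" by auto
    have d: "mkphi Fl path U lam \<in> sV_flows V Fl rate path c" "?val (mkphi Fl path U lam) = R2 Fl path U lam"
      using dir1[OF assms(1,2,3,6,4,5) l(1)] by auto
    show "y \<in> ?val ` sV_flows V Fl rate path c"
      by (rule image_eqI[OF _ d(1)]) (use d(2) l(2) in simp)
  next
    fix y assume "y \<in> ?val ` sV_flows V Fl rate path c"
    then obtain \<phi> where p: "\<phi> \<in> sV_flows V Fl rate path c" "y = ?val \<phi>" by auto
    have d: "lamof Fl path U \<phi> \<in> feasible V Fl rate c U" "R2 Fl path U (lamof Fl path U \<phi>) = ?val \<phi>"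
      using dir2[OF assms(1,2,3,6) p(1)] by auto
    show "y \<in> R2 Fl path U ` feasible V Fl rate c U"
      by (rule image_eqI[OF _ d(1)]) (use d(2) p(2) in simp)
  qed
  then show ?thesis unfolding R3_def Fmax_def Let_def by (rule arg_cong[where f=Sup])
qed

end
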